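(* Let $q$ be an odd prime power and let $\mathcal{O}$ be an oval in $PG(2,q)$; let $n=q+1$. Then $\mathcal{O}$ is a $(1,\mu)$-saturating $n$-set with $\mu=\frac{1}{2}(q-1)$. A linear code $C$ over $\mathbb{F}_q$ corresponding to $\mathcal{O}$ is an $[n,n-3,4]_q$ code with covering radius $2$, and it is a $(2,\mu)$-MCF code with $\mu$-density $\gamma_\mu(C,2)=1+\frac{1}{q}$.
   Context: $PG(2,q)$ is the projective plane over $\mathbb{F}_q$. An oval is a set of $q+1$ points of $PG(2,q)$ no three of which are collinear. For a point set $S$, a secant of $S$ is a line $\ell$ with $|\ell\cap S|\ge2$, counted with multiplicity $\binom{|\ell\cap S|}{2}$. A set $S$ of $n$ points of $PG(N,q)$ is a $(1,\mu)$-saturating $n$-set if (M1) $S$ spans $PG(N,q)$, (M2) $S\neq PG(N,q)$, and (M3) every point $Q\notin S$ lies on secants of $S$ whose multiplicities sum to at least $\mu$. A linear code of length $n$ over $\mathbb{F}_q$ corresponds to $S=\{P_1,\dots,P_n\}\subset PG(N,q)$ if it has a parity-check matrix whose $i$-th column is a homogeneous coordinate vector of $P_i$. An $[n,k,d]_q$ code is a linear code of length $n$, dimension $k$ and minimum distance $d$; its covering radius $R$ is $\max_{x\in\mathbb{F}_q^n} d(x,C)$ (Hamming distance). A code $C$ with covering radius $R$ is an $(R,\mu)$-MCF code if every $x\in\mathbb{F}_q^n$ with $d(x,C)=R$ is at distance exactly $R$ from at least $\mu$ codewords. Its $\mu$-density is $\gamma_\mu(C,R)=\frac{\sum_{x:\,d(x,C)=R}\#\{c\in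 C: d(x,c)=R\}}{\mu\cdot\#\{x\in\mathbb{F}_q^n: d(x,C)=R\}}$. *)

theory Defs
  imports "HOL-Analysis.Analysis"
begin

text \<open>Projective geometry PG(N,q): the underlying space is 'a^'m with 'a a finite field
  (q = CARD('a)) and N = CARD('m) - 1. A projective point is the set of nonzero
  scalar multiples of a nonzero vector.\<close>

definition proj_pt :: "'a::field^'m \<Rightarrow> ('a^'m) set" where
  "proj_pt v = {c *s v | c. c \<noteq> 0}"

definition PG :: "('a::field^'m) set set" where
  "PG = {proj_pt v | v. v \<noteq> 0}"

definition proj_line :: "('a::field^'m) set \<Rightarrow> ('a^'m) set \<Rightarrow> ('a^'m) set set" where
  "proj_line P Q = {R \<in> PG. R \<subseteq> vec.span (P \<union> Q)}"

definition proj_lines :: "('a::field^'m) set set set" where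
  "proj_lines = {proj_line P Q | P Q. P \<in> PG \<and> Q \<in> PG \<and> P \<noteq> Q}"

definition oval :: "('a::{finite,field}^3) set set \<Rightarrow> bool" where
  "oval Ov \<longleftrightarrow> Ov \<subseteq> PG \<and> card Ov = CARD('a) + 1 \<and>
     (\<forall>P\<in>Ov. \<forall>Q\<in>Ov. \<forall>R\<in>Ov. P \<noteq> Q \<and> P \<noteq> R \<and> Q \<noteq> R \<longrightarrow>
        \<not> (\<exists>L\<in>proj_lines. P \<in> L \<and> Q \<in> L \<and> R \<in> L))"

definition secant_mult_sum :: "('a::field^'m) set set \<Rightarrow> ('a^'m) set \<Rightarrow> nat" where
  "secant_mult_sum S Q =
     (\<Sum>L\<in>{L\<in>proj_lines. Q \<in> L \<and> card (L \<inter> S) \<ge> 2}. card (L \<inter> S) choose 2)"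

definition saturating_1 :: "('a::field^'m) set set \<Rightarrow> nat \<Rightarrow> nat \<Rightarrow> bool" where
  "saturating_1 S n \<mu> \<longleftrightarrow> S \<subseteq> PG \<and> card S = n \<and>
     vec.span (\<Union>S) = UNIV \<and> S \<noteq> PG \<and>
     (\<forall>Q\<in>PG - S. secant_mult_sum S Q \<ge> \<mu>)"

definition hamming_dist :: "'a^'n \<Rightarrow> 'a^'n \<Rightarrow> nat" where
  "hamming_dist x y = card {i. x $ i \<noteq> y $ i}"

definition code_of_pcm :: "'a::field^'n^'r \<Rightarrow> ('a^'n) set" where
  "code_of_pcm H = {x. H *v x = 0}"

text \<open>H is a parity-check matrix corresponding to the point set S:
  its i-th column is a homogeneous coordinate vector of P_i, where i \<mapsto> P_i enumerates S.\<close>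
definition corresponds :: "'a::field^'n^'m \<Rightarrow> ('a^'m) set set \<Rightarrow> bool" where
  "corresponds H S \<longleftrightarrow> (\<forall>i. column i H \<noteq> 0) \<and>
     bij_betw (\<lambda>i. proj_pt (column i H)) UNIV S"

definition dist_to_code :: "'a^'n \<Rightarrow> ('a^'n) set \<Rightarrow> nat" where
  "dist_to_code x C = Min (hamming_dist x ` C)"

definition min_distance :: "('a^'n) set \<Rightarrow> nat" where
  "min_distance C = Min {hamming_dist x y | x y. x \<in> C \<and> y \<in> C \<and> x \<noteq> y}"

definition covering_radius :: "('a::finite^'n) set \<Rightarrow> nat" where
  "covering_radius C = Max (range (\<lambda>x. dist_to_code x C))"

definition is_MCF :: "('a::finite^'n) set \<Rightarrow> nat \<Rightarrow> nat \<Rightarrow> bool" where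
  "is_MCF C R \<mu> \<longleftrightarrow> covering_radius C = R \<and>
     (\<forall>x. dist_to_code x C = R \<longrightarrow> card {c\<in>C. hamming_dist x c = R} \<ge> \<mu>)"

definition mu_density :: "('a::finite^'n) set \<Rightarrow> nat \<Rightarrow> nat \<Rightarrow> real" where
  "mu_density C R \<mu> =
     real (\<Sum>x\<in>{x. dist_to_code x C = R}. card {c\<in>C. hamming_dist x c = R}) /
     (real \<mu> * real (card {x. dist_to_code x C = R}))"

end

theory Submission
  imports Defs
begin


lemma card_span_indep:
  fixes B :: "('a::{finite,field}^'m) set"
  assumes ind: "vec.independent B"
  shows "card (vec.span B) = CARD('a) ^ card B"
proof -
  have fin: "finite B" by simp
  define f where "f u = (\<Sum>v\<in>B. u v *s v)" for u :: "'a^'m \<Rightarrow> 'a"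
  have img: "vec.span B = f ` (PiE B (\<lambda>_. UNIV))"
  proof
    show "vec.span B \<subseteq> f ` (PiE B (\<lambda>_. UNIV))"
    proof
      fix x assume "x \<in> vec.span B"
      then obtain u where u: "x = f u" using vec.span_finite[OF fin] f_def by auto
      have "f (restrict u B) = f u" unfolding f_def by (rule sum.cong) auto
      moreover have "restrict u B \<in> PiE B (\<lambda>_. UNIV)" by simp
      ultimately show "x \<in> f ` (PiE B (\<lambda>_. UNIV))" using u by (metis image_eqI)
    qed
    show "f ` (PiE B (\<lambda>_. UNIV)) \<subseteq> vec.span B"
      using vec.span_finite[OF fin] f_def by auto
  qed
  have inj: "inj_on f (PiE B (\<lambda>_. UNIV))"
  proof (rule inj_onI)
    fix u w assume u: "u \<in> PiE B (\<lambda>_. UNIV)" and w: "w \<in> PiE B (\<lambda>_. UNIV)" and e: "f u = f w"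
    have "(\<Sum>v\<in>B. (u v - w v) *s v) = f u - f w"
      unfolding f_def by (simp add: vec.scale_left_diff_distrib sum_subtractf)
    also have "\<dots> = 0" using e by simp
    finally have z: "(\<Sum>v\<in>B. (u v - w v) *s v) = 0" .
    from ind have H: "\<forall>c. (\<Sum>v\<in>B. c v *s v) = 0 \<longrightarrow> (\<forall>v\<in>B. c v = 0)"
      by (simp add: vec.independent_explicit)
    have "\<forall>v\<in>B. u v - w v = 0" using H[rule_format, of "\<lambda>v. u v - w v"] z by blast
    then show "u = w" using u w by (auto intro: PiE_ext)
  qed
  have "card (vec.span B) = card (PiE B (\<lambda>_. (UNIV::'a set)))"
    using img inj card_image by metis
  also have "\<dots> = CARD('a) ^ card B" using card_PiE[OF fin, of "\<lambda>_. (UNIV::'a set)"] by simp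
  finally show ?thesis .
qed

lemma card_subspace:
  fixes S :: "('a::{finite,field}^'m) set"
  assumes "vec.subspace S"
  shows "card S = CARD('a) ^ vec.dim S"
proof -
  obtain B where B: "B \<subseteq> S" "vec.independent B" "S \<subseteq> vec.span B" "card B = vec.dim S"
    using vec.basis_exists[of S] by blast
  have "vec.span B = S" using B assms vec.span_subspace by blast
  then show ?thesis using card_span_indep[OF B(2)] B(4) by simp
qed

lemma planes_meet:
  fixes S T :: "('a::field^3) set"
  assumes "vec.subspace S" "vec.subspace T" "vec.dim S = 2" "vec.dim T = 2" "S \<noteq> T"
  shows "vec.dim (S \<inter> T) = 1"
proof -
  have "vec.dim {x + y |x y. x \<in> S \<and> y \<in> T} + vec.dim (S \<inter> T) = 4"
    using vec.dim_sums_Int[OF assms(1,2)] assms by simp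
  moreover have "vec.dim {x + y |x y. x \<in> S \<and> y \<in> T} \<le> 3"
  proof -
    have d3: "vec.dim (UNIV::('a^3) set) = 3" by (subst vec_dim_card) simp
    show ?thesis using vec.dim_subset[of "{x + y |x y. x \<in> S \<and> y \<in> T}" UNIV] d3 by simp
  qed
  moreover have "vec.dim (S \<inter> T) \<noteq> 2"
  proof
    assume d: "vec.dim (S \<inter> T) = 2"
    have s1: "vec.subspace (S \<inter> T)" using assms vec.subspace_inter by blast
    have "S \<inter> T = S" using vec.subspace_dim_equal[OF s1 assms(1)] d assms by auto
    moreover have "S \<inter> T = T" using vec.subspace_dim_equal[OF s1 assms(2)] d assms by auto
    ultimately show False using assms by auto
  qed
  moreover have "vec.dim (S \<inter> T) \<le> 2" using vec.dim_subset[of "S \<inter> T" S] assms by auto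
  ultimately show ?thesis by linarith
qed

lemma card_Compl: "card (- (A::'x::finite set)) = CARD('x) - card A"
  by (simp add: Compl_eq_Diff_UNIV card_Diff_subset)


lemma card_filter_sum: "finite B \<Longrightarrow> card {b\<in>B. P b} = (\<Sum>b\<in>B. if P b then 1 else 0)"
  by (simp add: sum.If_cases Int_def)

lemma sum_card_swap:
  assumes "finite A" "finite B"
  shows "(\<Sum>a\<in>A. card {b\<in>B. R a b}) = (\<Sum>b\<in>B. card {a\<in>A. R a b})"
  using assms by (simp add: card_filter_sum sum.swap[of _ A B])

locale oc =
  fixes H :: "'a::{finite,field}^'n::finite^3"
  assumes oddq: "odd CARD('a)"
    and cardn: "CARD('n) = CARD('a) + 1"
    and hinj: "inj (\<lambda>i. column i H)"
    and pair_ind: "\<And>i j. i \<noteq> j \<Longrightarrow> vec.independent {column i H, column j H}"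
    and tri_ind: "\<And>i j k. i \<noteq> j \<Longrightarrow> i \<noteq> k \<Longrightarrow> j \<noteq> k \<Longrightarrow>
        vec.independent {column i H, column j H, column k H}"
begin

abbreviation "h i \<equiv> column i H"
definition "L i = vec.span {h i}"
definition "S i j = vec.span {h i, h j}"

lemma q_ge2: "CARD('a) \<ge> 2"
proof -
  have "card {0::'a, 1} = 2" by simp
  moreover have "card {0::'a, 1} \<le> CARD('a)" by (rule card_mono) auto
  ultimately show ?thesis by simp
qed

lemma q_ge3: "CARD('a) \<ge> 3" using q_ge2 oddq by presburger

lemma ex_other: "\<exists>j. j \<noteq> (i::'n)"
proof -
  have "card (UNIV::'n set) \<ge> 2" using cardn q_ge2 by simp
  then show ?thesis
    by (metis One_nat_def card.empty card_le_Suc0_iff_eq finite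
        not_less_eq_eq numeral_2_eq_2 zero_less_Suc)
qed

lemma hnz: "h i \<noteq> 0"
proof -
  obtain j where "j \<noteq> i" using ex_other by blast
  then show ?thesis using pair_ind[of i j] vec.dependent_zero[of "{h i, h j}"] by auto
qed

lemma hne: "i \<noteq> j \<Longrightarrow> h i \<noteq> h j"
  using hinj by (auto dest: injD)

lemma h_notin_L: "i \<noteq> j \<Longrightarrow> h j \<notin> L i"
  using pair_ind[of j i] hne[of j i] unfolding L_def by (simp add: vec.independent_insert)

lemma h_notin_S: "i \<noteq> j \<Longrightarrow> i \<noteq> k \<Longrightarrow> j \<noteq> k \<Longrightarrow> h k \<notin> S i j"
  using tri_ind[of k i j] hne[of k i] hne[of k j] unfolding S_def
  by (simp add: vec.independent_insert)

lemma ind_single: "vec.independent {h i}"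
  using hnz by (simp add: vec.independent_insert)

lemma subspace_L: "vec.subspace (L i)" unfolding L_def by simp
lemma subspace_S: "vec.subspace (S i j)" unfolding S_def by simp

lemma dim_L: "vec.dim (L i) = 1"
  unfolding L_def using vec.dim_span_eq_card_independent[OF ind_single] by simp

lemma dim_S: "i \<noteq> j \<Longrightarrow> vec.dim (S i j) = 2"
  unfolding S_def using vec.dim_span_eq_card_independent[OF pair_ind] hne by simp

lemma card_L: "card (L i) = CARD('a)"
  using card_subspace[OF subspace_L] dim_L by simp

lemma card_S: "i \<noteq> j \<Longrightarrow> card (S i j) = CARD('a)^2"
  using card_subspace[OF subspace_S] dim_S by simp

lemma card_V: "card (UNIV :: ('a^3) set) = CARD('a)^3" by simp

lemma h_in_L: "h i \<in> L i" unfolding L_def by (simp add: vec.span_base)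
lemma zero_in_L: "0 \<in> L i" unfolding L_def by (simp add: vec.span_zero)
lemma h_in_S1: "h i \<in> S i j" unfolding S_def by (simp add: vec.span_base)
lemma h_in_S2: "h j \<in> S i j" unfolding S_def by (simp add: vec.span_base)
lemma S_sym: "S i j = S j i" unfolding S_def by (simp add: insert_commute)

lemma L_sub: "h i \<in> W \<Longrightarrow> vec.subspace W \<Longrightarrow> L i \<subseteq> W"
  unfolding L_def by (simp add: vec.span_minimal)

lemma L_gen: assumes "v \<in> L k" "v \<noteq> 0" "v \<in> W" "vec.subspace W" shows "h k \<in> W"
proof -
  obtain c where c: "v = c *s h k" using assms(1) unfolding L_def vec.span_singleton by auto
  then have "c \<noteq> 0" using assms(2) by auto
  then have "h k = inverse c *s v" using c by simp
  then show ?thesis using assms(3,4) vec.subspace_scale by metis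
qed

lemma meet_L:
  assumes "vec.subspace A" "vec.subspace B" "vec.dim A = 2" "vec.dim B = 2" "A \<noteq> B"
    "h i \<in> A" "h i \<in> B"
  shows "A \<inter> B = L i"
proof -
  have d: "vec.dim (A \<inter> B) = 1" using planes_meet assms by blast
  have s: "L i \<subseteq> A \<inter> B" using L_sub assms by blast
  have "vec.subspace (A \<inter> B)" using assms vec.subspace_inter by blast
  then show ?thesis using vec.subspace_dim_equal[OF subspace_L _ s] d dim_L by simp
qed


lemma L_sub_S: "L i \<subseteq> S i j" using L_sub[OF h_in_S1 subspace_S] .

lemma S_meet: "j \<noteq> i \<Longrightarrow> k \<noteq> i \<Longrightarrow> j \<noteq> k \<Longrightarrow> S i j \<inter> S i k = L i"
  by (rule meet_L) (use subspace_S dim_S h_in_S1 h_in_S2 h_notin_S in metis)+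

lemma card_S_minus_L: "j \<noteq> i \<Longrightarrow> card (S i j - L i) = CARD('a)^2 - CARD('a)"
  using card_S[of i j] card_L[of i] L_sub_S[of i j] by (simp add: card_Diff_subset)

lemma arith1: "(q::nat) \<ge> 2 \<Longrightarrow> q + q*(q^2 - q) < q^3"
proof -
  assume "q \<ge> 2"
  then obtain m where m: "q = m + 2" by (metis add.commute le_Suc_ex)
  show ?thesis unfolding m by (simp add: power2_eq_square power3_eq_cube algebra_simps)
qed

lemma arith2: "(q::nat) \<ge> 1 \<Longrightarrow> (q+1)*(q^2 - q) = q^3 - q"
proof -
  assume "q \<ge> 1"
  then obtain m where m: "q = m + 1" by (metis add.commute le_Suc_ex)
  show ?thesis unfolding m by (simp add: power2_eq_square power3_eq_cube algebra_simps)
qed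

lemma arith3: "(q::nat) \<ge> 2 \<Longrightarrow> q^2 - q \<le> q^3 - q^2"
proof -
  assume "q \<ge> 2"
  then obtain m where m: "q = m + 2" by (metis add.commute le_Suc_ex)
  show ?thesis unfolding m by (simp add: power2_eq_square power3_eq_cube algebra_simps)
qed

lemma card_others: "card (- {i::'n}) = CARD('a)"
  using cardn by (simp add: card_Compl)

lemma ex_tan_w: "\<exists>w. w \<notin> L i \<and> (\<forall>j. j \<noteq> i \<longrightarrow> w \<notin> S i j)"
proof -
  let ?U = "L i \<union> (\<Union>j\<in>-{i}. S i j - L i)"
  have "card (\<Union>j\<in>-{i}. S i j - L i) \<le> (\<Sum>j\<in>-{i}. card (S i j - L i))"
    by (rule card_UN_le) simp
  also have "\<dots> = CARD('a) * (CARD('a)^2 - CARD('a))"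
    using card_S_minus_L card_others by simp
  finally have "card ?U \<le> CARD('a) + CARD('a) * (CARD('a)^2 - CARD('a))"
    using card_Un_le[of "L i" "\<Union>j\<in>-{i}. S i j - L i"] card_L[of i] by linarith
  also have "\<dots> < CARD('a)^3" using arith1 q_ge2 by blast
  finally have "?U \<noteq> UNIV" using card_V by auto
  then obtain w where "w \<notin> ?U" by blast
  then show ?thesis by blast
qed

definition "wt i = (SOME w. w \<notin> L i \<and> (\<forall>j. j \<noteq> i \<longrightarrow> w \<notin> S i j))"
definition "T i = vec.span {h i, wt i}"

lemma wt: "wt i \<notin> L i" "j \<noteq> i \<Longrightarrow> wt i \<notin> S i j"
  using someI_ex[OF ex_tan_w[of i]] unfolding wt_def by blast+

lemma T_ind: "vec.independent {h i, wt i}"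
proof -
  have "wt i \<noteq> h i" using wt(1) h_in_L by metis
  have "vec.independent (insert (wt i) {h i})"
    using ind_single[of i] wt(1)[of i] \<open>wt i \<noteq> h i\<close> unfolding L_def
    by (simp add: vec.independent_insert)
  then show ?thesis by (simp add: insert_commute)
qed

lemma subspace_T: "vec.subspace (T i)" unfolding T_def by simp
lemma dim_T: "vec.dim (T i) = 2"
proof -
  have "wt i \<noteq> h i" using wt(1) h_in_L by metis
  then show ?thesis unfolding T_def using vec.dim_span_eq_card_independent[OF T_ind] by simp
qed
lemma h_in_T: "h i \<in> T i" unfolding T_def by (simp add: vec.span_base)

lemma h_notin_T: assumes "j \<noteq> i" shows "h j \<notin> T i"
proof
  assume "h j \<in> T i"
  then have "{h i, h j} \<subseteq> T i" using h_in_T by blast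
  then have "S i j \<subseteq> T i" unfolding S_def by (simp add: vec.span_minimal subspace_T)
  then have "S i j = T i" using vec.subspace_dim_equal[OF subspace_S subspace_T] dim_S dim_T assms
    by simp
  moreover have "wt i \<in> T i" unfolding T_def by (simp add: vec.span_base)
  ultimately show False using wt(2)[OF assms] by simp
qed

definition "P i j = (if j = i then T i else S i j)"

lemma subspace_P: "vec.subspace (P i j)" unfolding P_def using subspace_T subspace_S by simp
lemma dim_P: "vec.dim (P i j) = 2" unfolding P_def using dim_T dim_S by simp
lemma h_in_P: "h i \<in> P i j" unfolding P_def using h_in_T h_in_S1 by simp

lemma P_h: "h k \<in> P i j \<longleftrightarrow> (k = i \<or> (j \<noteq> i \<and> k = j))"
  unfolding P_def using h_in_T h_notin_T h_in_S1 h_in_S2 h_notin_S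
  by (cases "j = i"; cases "k = i"; cases "k = j") auto

lemma P_inj: "P i j = P i k \<Longrightarrow> j = k"
  using P_h by metis

lemma P_meet: "j \<noteq> k \<Longrightarrow> P i j \<inter> P i k = L i"
  using meet_L subspace_P dim_P h_in_P P_inj by metis

lemma L_sub_P: "L i \<subseteq> P i j" using L_sub[OF h_in_P subspace_P] .

lemma P_cover: assumes "s \<notin> L i" shows "\<exists>j. s \<in> P i j"
proof -
  let ?F = "\<lambda>j. P i j - L i"
  have c: "card (?F j) = CARD('a)^2 - CARD('a)" for j
    using card_subspace[OF subspace_P, of i j] dim_P card_L[of i] L_sub_P[of i j]
    by (simp add: card_Diff_subset)
  have "card (\<Union>j. ?F j) = (\<Sum>j\<in>UNIV. card (?F j))"
    by (rule card_UN_disjoint) (use P_meet in auto)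
  also have "\<dots> = (CARD('a)+1) * (CARD('a)^2 - CARD('a))" using c cardn by simp
  also have "\<dots> = CARD('a)^3 - CARD('a)" using arith2 q_ge2 by simp
  also have "\<dots> = card (- L i)" using card_L[of i] card_V by (simp add: card_Compl)
  finally have e: "card (\<Union>j. ?F j) = card (- L i)" .
  have "(\<Union>j. ?F j) = - L i" by (rule card_subset_eq) (use e in auto)
  then show ?thesis using assms by auto
qed


definition "X = {s. \<forall>k. s \<notin> L k}"
definition "Tset s = {i. s \<in> T i}"
definition "Mset s = {i. \<exists>j. j \<noteq> i \<and> s \<in> S i j}"
definition "pairs s = {{i,j} | i j. i \<noteq> j \<and> s \<in> S i j}"

lemma T_eq_P: "T i = P i i" unfolding P_def by simp
lemma S_eq_P: "j \<noteq> i \<Longrightarrow> S i j = P i j" unfolding P_def by simp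

lemma Tset_compl: assumes "s \<in> X" shows "- Tset s = Mset s"
proof -
  have sL: "s \<notin> L i" for i using assms unfolding X_def by blast
  have "i \<notin> Tset s \<longleftrightarrow> i \<in> Mset s" for i
  proof -
    obtain j where j: "s \<in> P i j" using P_cover[OF sL] by blast
    show ?thesis
    proof (cases "j = i")
      case True
      then have "s \<in> T i" using j T_eq_P by simp
      moreover have "\<not> (\<exists>j'. j' \<noteq> i \<and> s \<in> S i j')"
      proof
        assume "\<exists>j'. j' \<noteq> i \<and> s \<in> S i j'"
        then obtain j' where j': "j' \<noteq> i" "s \<in> S i j'" by blast
        then have "s \<in> P i j' \<inter> P i i" using S_eq_P[of j' i] \<open>s \<in> T i\<close> T_eq_P by simp
        then show False using P_meet[OF j'(1), of i] sL by simp
      qed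
      ultimately show ?thesis unfolding Tset_def Mset_def by simp
    next
      case False
      then have "s \<in> S i j" using j S_eq_P by simp
      moreover have "s \<notin> T i"
      proof
        assume "s \<in> T i"
        then have "s \<in> P i j \<inter> P i i" using j T_eq_P by simp
        then show False using P_meet[OF False, of i] sL by simp
      qed
      ultimately show ?thesis unfolding Tset_def Mset_def using False by auto
    qed
  qed
  then show ?thesis by blast
qed

lemma card_T_M: assumes "s \<in> X" shows "card (Tset s) + card (Mset s) = CARD('a) + 1"
proof -
  have "card (Tset s) + card (- Tset s) = CARD('n)"
    using card_Compl[of "Tset s"] card_mono[of UNIV "Tset s"] by simp
  then show ?thesis using Tset_compl[OF assms] cardn by simp
qed

lemma S_unique: assumes "s \<in> X" "j \<noteq> i" "k \<noteq> i" "s \<in> S i j" "s \<in> S i k" shows "j = k"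
proof (rule ccontr)
  assume "j \<noteq> k"
  then have "s \<in> L i" using S_meet[of j i k] assms by blast
  then show False using assms(1) unfolding X_def by blast
qed

lemma pairs_elem: assumes "p \<in> pairs s" "x \<in> p" shows "\<exists>y. y \<noteq> x \<and> s \<in> S x y \<and> p = {x, y}"
proof -
  obtain i j where p: "p = {i,j}" "i \<noteq> j" "s \<in> S i j" using assms(1) unfolding pairs_def by blast
  show ?thesis
  proof (cases "x = i")
    case True then show ?thesis using p by (intro exI[of _ j]) auto
  next
    case False
    then have "x = j" using p assms(2) by blast
    have "s \<in> S x i" using p \<open>x = j\<close> S_sym[of i j] by simp
    moreover have "p = {x, i}" using p \<open>x = j\<close> by (simp add: insert_commute)
    ultimately show ?thesis using p \<open>x = j\<close> by (intro exI[of _ i]) auto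
  qed
qed

lemma Union_pairs: "\<Union>(pairs s) = Mset s"
proof
  show "\<Union>(pairs s) \<subseteq> Mset s"
  proof
    fix x assume "x \<in> \<Union>(pairs s)"
    then obtain p where "p \<in> pairs s" "x \<in> p" by blast
    then obtain y where "y \<noteq> x" "s \<in> S x y" using pairs_elem by blast
    then show "x \<in> Mset s" unfolding Mset_def by blast
  qed
  show "Mset s \<subseteq> \<Union>(pairs s)"
  proof
    fix x assume "x \<in> Mset s"
    then obtain j where "j \<noteq> x" "s \<in> S x j" unfolding Mset_def by blast
    then have "{x,j} \<in> pairs s" unfolding pairs_def by blast
    then show "x \<in> \<Union>(pairs s)" by blast
  qed
qed

lemma card_Mset: assumes "s \<in> X" shows "card (Mset s) = 2 * card (pairs s)"
proof -
  have disj: "disjoint (pairs s)"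
  proof (rule pairwiseI)
    fix p p' assume p: "p \<in> pairs s" and p': "p' \<in> pairs s" and ne: "p \<noteq> p'"
    show "disjnt p p'"
    proof (rule ccontr)
      assume "\<not> disjnt p p'"
      then obtain x where x: "x \<in> p" "x \<in> p'" unfolding disjnt_def by blast
      obtain y where y: "y \<noteq> x" "s \<in> S x y" "p = {x,y}" using pairs_elem[OF p x(1)] by blast
      obtain z where z: "z \<noteq> x" "s \<in> S x z" "p' = {x,z}" using pairs_elem[OF p' x(2)] by blast
      have "y = z" using S_unique[OF assms y(1) z(1) y(2) z(2)] .
      then show False using ne y z by simp
    qed
  qed
  have c2: "card p = 2" if "p \<in> pairs s" for p using that unfolding pairs_def by auto
  have "card (\<Union>(pairs s)) = sum card (pairs s)"
    by (rule card_Union_disjoint[OF disj]) simp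
  also have "\<dots> = 2 * card (pairs s)" using c2 by simp
  finally show ?thesis using Union_pairs by simp
qed

lemma t_plus_2N: assumes "s \<in> X" shows "card (Tset s) + 2 * card (pairs s) = CARD('a) + 1"
  using card_T_M[OF assms] card_Mset[OF assms] by simp


lemma L_inter: assumes "i \<noteq> j" shows "L i \<inter> L j = {0}"
proof -
  have "s = 0" if "s \<in> L i" "s \<in> L j" for s
  proof (rule ccontr)
    assume "s \<noteq> 0"
    then have "h i \<in> L j" using L_gen[OF that(1) _ that(2) subspace_L] by blast
    then show False using h_notin_L assms by metis
  qed
  then show ?thesis using zero_in_L by blast
qed

lemma L_sub_T: "L i \<subseteq> T i" using L_sub[OF h_in_T subspace_T] .

lemma X_T: "{s\<in>X. s \<in> T i} = T i - L i"
proof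
  show "{s\<in>X. s \<in> T i} \<subseteq> T i - L i" unfolding X_def by blast
  show "T i - L i \<subseteq> {s\<in>X. s \<in> T i}"
  proof
    fix s assume s: "s \<in> T i - L i"
    have "s \<notin> L k" for k
    proof
      assume sk: "s \<in> L k"
      have "s \<noteq> 0" using s zero_in_L by blast
      then have "h k \<in> T i" using L_gen[OF sk _ _ subspace_T] s by blast
      then have "k = i" using h_notin_T by metis
      then show False using s sk by blast
    qed
    then show "s \<in> {s\<in>X. s \<in> T i}" using s unfolding X_def by blast
  qed
qed

lemma X_TT: assumes "i \<noteq> j" shows "{s\<in>X. s \<in> T i \<and> s \<in> T j} = (T i \<inter> T j) - {0}"
proof
  show "{s\<in>X. s \<in> T i \<and> s \<in> T j} \<subseteq> (T i \<inter> T j) - {0}"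
    unfolding X_def using zero_in_L by blast
  show "(T i \<inter> T j) - {0} \<subseteq> {s\<in>X. s \<in> T i \<and> s \<in> T j}"
  proof
    fix s assume s: "s \<in> (T i \<inter> T j) - {0}"
    have "s \<notin> L k" for k
    proof
      assume sk: "s \<in> L k"
      have "h k \<in> T i" using L_gen[OF sk _ _ subspace_T] s by blast
      then have "k = i" using h_notin_T by metis
      have "h k \<in> T j" using L_gen[OF sk _ _ subspace_T] s by blast
      then have "k = j" using h_notin_T by metis
      then show False using \<open>k = i\<close> assms by simp
    qed
    then show "s \<in> {s\<in>X. s \<in> T i \<and> s \<in> T j}" using s unfolding X_def by blast
  qed
qed

lemma card_XT: "card {s\<in>X. s \<in> T i} = CARD('a)^2 - CARD('a)"
  unfolding X_T using card_subspace[OF subspace_T, of i] dim_T card_L[of i] L_sub_T[of i]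
  by (simp add: card_Diff_subset)

lemma card_XTT: assumes "i \<noteq> j" shows "card {s\<in>X. s \<in> T i \<and> s \<in> T j} = CARD('a) - 1"
proof -
  have ne: "T i \<noteq> T j" using h_in_T[of i] h_notin_T[of i j] assms by metis
  have d: "vec.dim (T i \<inter> T j) = 1"
    using planes_meet[OF subspace_T subspace_T dim_T dim_T ne] .
  have "card (T i \<inter> T j) = CARD('a)"
    using card_subspace[of "T i \<inter> T j"] vec.subspace_inter[OF subspace_T subspace_T] d by simp
  moreover have "0 \<in> T i \<inter> T j" using subspace_T vec.subspace_0 by blast
  ultimately show ?thesis unfolding X_TT[OF assms] by (simp add: card_Diff_subset)
qed

lemma sum_t: "(\<Sum>s\<in>X. card (Tset s)) = (CARD('a)+1) * (CARD('a)^2 - CARD('a))"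
proof -
  have "(\<Sum>s\<in>X. card (Tset s)) = (\<Sum>s\<in>X. card {i\<in>UNIV. s \<in> T i})"
    unfolding Tset_def by simp
  also have "\<dots> = (\<Sum>i\<in>UNIV. card {s\<in>X. s \<in> T i})" by (rule sum_card_swap) auto
  also have "\<dots> = (CARD('a)+1) * (CARD('a)^2 - CARD('a))" using card_XT cardn by simp
  finally show ?thesis .
qed

lemma sum_t2: "(\<Sum>s\<in>X. card (Tset s)^2) = 2 * ((CARD('a)+1) * (CARD('a)^2 - CARD('a)))"
proof -
  let ?R = "\<lambda>s (p::'n\<times>'n). s \<in> T (fst p) \<and> s \<in> T (snd p)"
  have sq: "card (Tset s)^2 = card {p\<in>UNIV. ?R s p}" for s
  proof -
    have "{p\<in>UNIV. ?R s p} = Tset s \<times> Tset s" unfolding Tset_def by auto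
    then show ?thesis by (simp add: card_cartesian_product power2_eq_square)
  qed
  have "(\<Sum>s\<in>X. card (Tset s)^2) = (\<Sum>s\<in>X. card {p\<in>UNIV. ?R s p})" using sq by simp
  also have "\<dots> = (\<Sum>p\<in>UNIV. card {s\<in>X. ?R s p})" by (rule sum_card_swap) auto
  also have "\<dots> = (\<Sum>p\<in>UNIV \<times> UNIV. card {s\<in>X. s \<in> T (fst p) \<and> s \<in> T (snd p)})"
    by simp
  also have "\<dots> = (\<Sum>i\<in>UNIV. \<Sum>j\<in>UNIV. card {s\<in>X. s \<in> T i \<and> s \<in> T j})"
    by (simp add: sum.cartesian_product case_prod_beta)
  also have "\<dots> = (\<Sum>i\<in>(UNIV::'n set). 2 * (CARD('a)^2 - CARD('a)))"
  proof (rule sum.cong)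
    fix i :: 'n assume "i \<in> UNIV"
    have "(\<Sum>j\<in>UNIV. card {s\<in>X. s \<in> T i \<and> s \<in> T j})
        = card {s\<in>X. s \<in> T i \<and> s \<in> T i} + (\<Sum>j\<in>UNIV - {i}. card {s\<in>X. s \<in> T i \<and> s \<in> T j})"
      by (rule sum.remove) auto
    also have "\<dots> = (CARD('a)^2 - CARD('a)) + (\<Sum>j\<in>UNIV - {i}. CARD('a) - 1)"
      using card_XT[of i] card_XTT[of i] by simp
    also have "\<dots> = (CARD('a)^2 - CARD('a)) + CARD('a) * (CARD('a) - 1)"
      using card_others[of i] by (simp add: Compl_eq_Diff_UNIV)
    also have "\<dots> = 2 * (CARD('a)^2 - CARD('a))"
      by (simp add: power2_eq_square diff_mult_distrib2)
    finally show "(\<Sum>j\<in>UNIV. card {s\<in>X. s \<in> T i \<and> s \<in> T j}) = 2 * (CARD('a)^2 - CARD('a))" .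
  qed simp
  also have "\<dots> = 2 * ((CARD('a)+1) * (CARD('a)^2 - CARD('a)))" using cardn by simp
  finally show ?thesis .
qed

lemma t_even: assumes "s \<in> X" shows "even (card (Tset s))"
  using t_plus_2N[OF assms] oddq by presburger

lemma t_le2: assumes "s \<in> X" shows "card (Tset s) \<le> 2"
proof -
  let ?t = "\<lambda>s. card (Tset s)"
  have ge: "2 * ?t s \<le> ?t s ^ 2" if "s \<in> X" for s
  proof -
    have "?t s \<noteq> 1" using t_even[OF that] by auto
    then show ?thesis by (cases "?t s") (auto simp: power2_eq_square)
  qed
  have "(\<Sum>s\<in>X. ?t s ^ 2 - 2 * ?t s) = (\<Sum>s\<in>X. ?t s ^ 2) - (\<Sum>s\<in>X. 2 * ?t s)"
    by (rule sum_subtractf_nat) (use ge in blast)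
  also have "\<dots> = 0" using sum_t sum_t2 by (simp add: sum_distrib_left[symmetric])
  finally have "\<forall>s\<in>X. ?t s ^ 2 - 2 * ?t s = 0" by simp
  then have "?t s ^ 2 \<le> 2 * ?t s" using assms by simp
  then show ?thesis by (cases "?t s \<le> 2") (auto simp: power2_eq_square)
qed

lemma N_bound: assumes "s \<in> X" shows "card (pairs s) \<ge> (CARD('a) - 1) div 2" "card (pairs s) \<ge> 1"
  using t_plus_2N[OF assms] t_le2[OF assms] q_ge3 by linarith+

lemma card_X: "card X = CARD('a)^3 - CARD('a)^2"
proof -
  define A where "A = (\<Union>k. L k - {0})"
  have U: "(\<Union>k. L k) = insert 0 A" using zero_in_L unfolding A_def by blast
  have "card A = (\<Sum>k\<in>UNIV. card (L k - {0}))"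
    unfolding A_def by (rule card_UN_disjoint) (use L_inter in auto)
  also have "\<dots> = (CARD('a)+1) * (CARD('a) - 1)"
    using card_L zero_in_L cardn by (simp add: card_Diff_subset)
  finally have c0: "card A = (CARD('a)+1) * (CARD('a) - 1)" .
  have "0 \<notin> A" unfolding A_def by blast
  then have "card (insert 0 A) = Suc (card A)" by (simp add: card_insert_disjoint)
  then have c1: "card (\<Union>k. L k) = 1 + (CARD('a)+1) * (CARD('a) - 1)"
    unfolding U c0 by simp
  have "1 + (CARD('a)+1) * (CARD('a) - 1) = CARD('a)^2"
    using q_ge2 by (simp add: power2_eq_square algebra_simps)
  then have "card (\<Union>k. L k) = CARD('a)^2" using c1 by simp
  moreover have "X = - (\<Union>k. L k)" unfolding X_def by auto
  ultimately show ?thesis using card_Compl card_V by metis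
qed

lemma X_nonempty: "X \<noteq> {}"
proof -
  have "CARD('a)^2 < CARD('a)^3" using q_ge2 by (simp add: power_strict_increasing)
  then show ?thesis using card_X by auto
qed


definition "supp (x::'a^'n) = {i. x $ i \<noteq> 0}"

lemma Hmult: "H *v x = (\<Sum>i\<in>UNIV. x $ i *s h i)"
  by (simp add: matrix_mult_sum)

lemma card_n_ge4: "CARD('n) \<ge> 4" using cardn q_ge3 by simp

lemma extend3: assumes "card (A::'n set) \<le> 3" shows "\<exists>B. A \<subseteq> B \<and> card B = 3"
proof -
  have "3 - card A \<le> card (- A)" using card_Compl[of A] card_n_ge4 assms by simp
  then obtain C where C: "C \<subseteq> - A" "card C = 3 - card A" "finite C"
    by (rule obtain_subset_with_card_n)
  have "card (A \<union> C) = card A + card C" by (rule card_Un_disjoint) (use C in auto)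
  then show ?thesis using C assms by (intro exI[of _ "A \<union> C"]) auto
qed

lemma indep_small: assumes "card A \<le> 3" shows "vec.independent (h ` A)"
proof -
  obtain B where B: "A \<subseteq> B" "card B = 3" using extend3[OF assms] by blast
  then obtain i j k where "B = {i,j,k}" "i \<noteq> j" "j \<noteq> k" "i \<noteq> k" using card_3_iff by metis
  then have "vec.independent (h ` B)" using tri_ind by auto
  then show ?thesis using B(1) vec.independent_mono by (meson image_mono)
qed

lemma inj_h: "inj_on h A" using hinj by (auto intro: inj_on_subset)

lemma kernel_small:
  assumes "card A \<le> 3" "\<forall>i. i \<notin> A \<longrightarrow> x $ i = 0" "H *v x = 0"
  shows "x = 0"
proof -
  have ind: "vec.independent (h ` A)" using indep_small[OF assms(1)] .
  define c where "c v = x $ (inv_into A h v)" for v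
  have "H *v x = (\<Sum>i\<in>A. x $ i *s h i)"
    unfolding Hmult by (rule sum.mono_neutral_right) (use assms(2) in auto)
  also have "\<dots> = (\<Sum>v\<in>h ` A. c v *s v)"
    by (subst sum.reindex[OF inj_h]) (simp add: c_def inv_into_f_f[OF inj_h])
  finally have z: "(\<Sum>v\<in>h ` A. c v *s v) = 0" using assms(3) by simp
  from ind have HH: "\<forall>c. (\<Sum>v\<in>h ` A. c v *s v) = 0 \<longrightarrow> (\<forall>v\<in>h ` A. c v = 0)"
    by (simp add: vec.independent_explicit)
  have "\<forall>v\<in>h ` A. c v = 0" using HH z by blast
  then have "x $ i = 0" if "i \<in> A" for i
    using that by (auto simp: c_def inv_into_f_f[OF inj_h])
  then show ?thesis using assms(2) by (simp add: vec_eq_iff) (metis vector_space_over_itself.scale_zero_left)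
qed

lemma kernel_small2:
  assumes "card A \<le> 3" "supp x \<subseteq> A" "supp y \<subseteq> A" "H *v x = H *v y"
  shows "x = y"
proof -
  have "H *v (x - y) = 0" using assms(4) by (simp add: matrix_vector_mult_diff_distrib)
  moreover have "\<forall>i. i \<notin> A \<longrightarrow> (x - y) $ i = 0"
  proof (intro allI impI)
    fix i assume "i \<notin> A"
    then have "x $ i = 0" "y $ i = 0" using assms(2,3) unfolding supp_def by auto
    then show "(x - y) $ i = 0" by simp
  qed
  ultimately have "x - y = 0" using kernel_small[OF assms(1)] by blast
  then show ?thesis by simp
qed

lemma represent:
  assumes "s \<in> vec.span (h ` A)"
  shows "\<exists>x. supp x \<subseteq> A \<and> H *v x = s"
proof -
  obtain u where u: "s = (\<Sum>v\<in>h ` A. u v *s v)"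
    using assms vec.span_finite[of "h ` A"] by auto
  define x where "x = (\<chi> m. if m \<in> A then u (h m) else 0)"
  have "H *v x = (\<Sum>i\<in>A. u (h i) *s h i)"
    unfolding Hmult by (rule sum.mono_neutral_cong_right) (auto simp: x_def)
  also have "\<dots> = s" unfolding u by (subst sum.reindex[OF inj_h]) simp
  finally show ?thesis by (intro exI[of _ x]) (auto simp: supp_def x_def)
qed

lemma in_span_supp:
  assumes "supp x \<subseteq> A" shows "H *v x \<in> vec.span (h ` A)"
  unfolding Hmult
proof (rule vec.span_sum)
  fix i assume "i \<in> (UNIV::'n set)"
  show "x $ i *s h i \<in> vec.span (h ` A)"
  proof (cases "i \<in> A")
    case True then show ?thesis by (simp add: vec.span_base vec.span_scale)
  next
    case False then have "x $ i = 0" using assms unfolding supp_def by auto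
    then show ?thesis by (simp add: vec.span_zero)
  qed
qed

lemma L_img: "L i = vec.span (h ` {i})" unfolding L_def by simp
lemma S_img: "S i j = vec.span (h ` {i,j})" unfolding S_def by simp

lemma ex3: "\<exists>i j k::'n. i \<noteq> j \<and> j \<noteq> k \<and> i \<noteq> k"
proof -
  have "3 \<le> card (UNIV::'n set)" using card_n_ge4 by simp
  then obtain B :: "'n set" where "card B = 3" by (meson obtain_subset_with_card_n)
  then show ?thesis using card_3_iff by metis
qed

lemma span3: assumes "i \<noteq> j" "j \<noteq> k" "i \<noteq> k" shows "vec.span (h ` {i,j,k}) = UNIV"
proof -
  have ind: "vec.independent (h ` {i,j,k})" using tri_ind assms by auto
  have "card (h ` {i,j,k}) = 3" using hne assms by auto
  then have "card (h ` {i,j,k}) = vec.dim (UNIV :: ('a^3) set)" by (subst vec_dim_card) simp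
  then show ?thesis using vec.card_eq_dim[of "h ` {i,j,k}" UNIV] ind by auto
qed

lemma surj_H: "\<exists>x. H *v x = s"
proof -
  obtain i j k :: 'n where "i \<noteq> j" "j \<noteq> k" "i \<noteq> k" using ex3 by blast
  then show ?thesis using represent[of s "{i,j,k}"] span3 by auto
qed

definition "C = code_of_pcm H"

lemma C_mem: "x \<in> C \<longleftrightarrow> H *v x = 0" unfolding C_def code_of_pcm_def by simp

lemma subspace_C: "vec.subspace C" unfolding C_def code_of_pcm_def by (rule vec.subspace_kernel)

lemma zero_C: "0 \<in> C" by (simp add: C_mem)

lemma fiber_card: "card {x. H *v x = s} = card C"
proof -
  obtain x0 where x0: "H *v x0 = s" using surj_H by blast
  have "{x. H *v x = s} = (\<lambda>c. c + x0) ` C"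
  proof
    show "{x. H *v x = s} \<subseteq> (\<lambda>c. c + x0) ` C"
    proof
      fix x assume "x \<in> {x. H *v x = s}"
      then have "x - x0 \<in> C" using x0 by (simp add: C_mem matrix_vector_mult_diff_distrib)
      then show "x \<in> (\<lambda>c. c + x0) ` C" by (metis diff_add_cancel imageI)
    qed
    show "(\<lambda>c. c + x0) ` C \<subseteq> {x. H *v x = s}"
      using x0 by (auto simp: C_mem matrix_vector_right_distrib)
  qed
  moreover have "inj_on (\<lambda>c. c + x0) C" by (auto intro: inj_onI)
  ultimately show ?thesis by (simp add: card_image)
qed

lemma card_C_mult: "card C * CARD('a)^3 = CARD('a)^CARD('n)"
proof -
  have "(\<Sum>y\<in>(UNIV::('a^3) set). \<Sum>x\<in>{x \<in> (UNIV::('a^'n) set). H *v x = y}. (1::nat))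
      = (\<Sum>x\<in>(UNIV::('a^'n) set). 1)"
    by (rule sum.group) auto
  then have "(\<Sum>y\<in>(UNIV::('a^3) set). card {x. H *v x = y}) = CARD('a^'n)" by simp
  then show ?thesis using fiber_card by (simp add: mult.commute)
qed

lemma dim_C: "vec.dim C = CARD('n) - 3"
proof -
  have "CARD('a)^(vec.dim C + 3) = CARD('a)^CARD('n)"
    using card_C_mult card_subspace[OF subspace_C] by (simp add: power_add)
  then have "vec.dim C + 3 = CARD('n)" using q_ge2 by (simp add: power_inject_exp)
  then show ?thesis by simp
qed


lemma H_axis: "H *v axis l 1 = h l"
  by ((simp add: vec_eq_iff matrix_vector_mult_def axis_def column_def; fail)
    | (simp add: vec_eq_iff matrix_vector_mult_def axis_def column_def if_distrib cong: if_cong; fail)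
    | (simp add: Hmult axis_def if_distrib cong: if_cong; fail)
    | (metis matrix_vector_mult_basis))

lemma hd_eq: "hamming_dist x y = card (supp (x - y))"
  unfolding hamming_dist_def supp_def by simp

lemma C_diff: "x \<in> C \<Longrightarrow> y \<in> C \<Longrightarrow> x - y \<in> C"
  by (simp add: C_mem matrix_vector_mult_diff_distrib)

lemma wt_ge4: assumes "x \<in> C" "x \<noteq> 0" shows "card (supp x) \<ge> 4"
proof (rule ccontr)
  assume "\<not> card (supp x) \<ge> 4"
  then have "card (supp x) \<le> 3" by simp
  moreover have "\<forall>i. i \<notin> supp x \<longrightarrow> x $ i = 0" unfolding supp_def by simp
  ultimately have "x = 0" using kernel_small assms(1) C_mem by blast
  then show False using assms by simp
qed

lemma exists_w4: "\<exists>y\<in>C. card (supp y) = 4"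
proof -
  obtain i j k :: 'n where d: "i \<noteq> j" "j \<noteq> k" "i \<noteq> k" using ex3 by blast
  have "card {i,j,k} = 3" using d by simp
  then have "{i,j,k} \<noteq> UNIV"
  proof -
    assume c: "card {i,j,k} = 3"
    show ?thesis
    proof
      assume "{i,j,k} = UNIV"
      then show False using c card_n_ge4 by simp
    qed
  qed
  then obtain l where l: "l \<notin> {i,j,k}" by blast
  obtain x where x: "supp x \<subseteq> {i,j,k}" "H *v x = h l"
    using represent[of "h l" "{i,j,k}"] span3[OF d] by auto
  define y where "y = x - axis l 1"
  have Hy: "H *v y = 0" unfolding y_def
    by (simp add: matrix_vector_mult_diff_distrib x(2) H_axis)
  have xl: "x $ l = 0" using x(1) l unfolding supp_def by auto
  have yl: "y $ l \<noteq> 0" unfolding y_def using xl by (simp add: axis_def)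
  have "supp y \<subseteq> {i,j,k,l}"
  proof
    fix m assume m: "m \<in> supp y"
    show "m \<in> {i,j,k,l}"
    proof (rule ccontr)
      assume "m \<notin> {i,j,k,l}"
      then have "x $ m = 0" "axis l 1 $ m = (0::'a)" using x(1) unfolding supp_def by (auto simp: axis_def)
      then show False using m unfolding supp_def y_def by simp
    qed
  qed
  moreover have "card {i,j,k,l} = 4" using d l by auto
  ultimately have "card (supp y) \<le> 4" using card_mono[of "{i,j,k,l}" "supp y"] by simp
  moreover have "y \<noteq> 0" using yl by auto
  moreover have "y \<in> C" using Hy C_mem by simp
  ultimately show ?thesis using wt_ge4[of y] by (intro bexI[of _ y]) auto
qed


lemma min_dist: "min_distance C = 4"
proof -
  let ?D = "{hamming_dist x y | x y. x \<in> C \<and> y \<in> C \<and> x \<noteq> y}"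
  have fin: "finite ?D"
  proof (rule finite_subset)
    show "?D \<subseteq> {..CARD('n)}"
      unfolding hamming_dist_def by (auto intro!: card_mono)
  qed simp
  have ge: "4 \<le> d" if dD: "d \<in> ?D" for d
  proof -
    obtain x y where xy: "d = hamming_dist x y" "x \<in> C" "y \<in> C" "x \<noteq> y" using dD by blast
    then show ?thesis using wt_ge4[OF C_diff[OF xy(2,3)]] hd_eq by simp
  qed
  obtain y where y: "y \<in> C" "card (supp y) = 4" using exists_w4 by blast
  have "y \<noteq> 0"
  proof
    assume "y = 0"
    then have "supp y = {}" by (simp add: supp_def)
    then show False using y(2) by simp
  qed
  then have "4 \<in> ?D" using y zero_C hd_eq[of y 0] by fastforce
  then show ?thesis unfolding min_distance_def by (intro Min_eqI[OF fin ge]) auto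
qed

lemma finC: "finite C" by simp

lemma dist_le: "c \<in> C \<Longrightarrow> dist_to_code x C \<le> hamming_dist x c"
  unfolding dist_to_code_def by (rule Min_le) auto

lemma dist_ge: "(\<And>c. c \<in> C \<Longrightarrow> m \<le> hamming_dist x c) \<Longrightarrow> m \<le> dist_to_code x C"
  unfolding dist_to_code_def using zero_C by (subst Min_ge_iff) auto

lemma close_vec:
  assumes "supp e \<subseteq> A" "H *v e = H *v x"
  shows "x - e \<in> C" "hamming_dist x (x - e) = card (supp e)"
  using assms by (auto simp: C_mem matrix_vector_mult_diff_distrib hd_eq)

lemma card_supp_le1:
  assumes "card (supp e) \<le> 1" shows "\<exists>m. supp e \<subseteq> {m}"
proof (cases "supp e = {}")
  case True then show ?thesis by blast
next
  case False
  then have "card (supp e) = 1" using assms by (simp add: le_Suc_eq card_eq_0_iff)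
  then show ?thesis by (metis card_1_singletonE order_refl)
qed

lemma pair_exists: assumes "s \<in> X" shows "\<exists>i j. i \<noteq> j \<and> s \<in> S i j"
proof -
  have "pairs s \<noteq> {}" using N_bound(2)[OF assms] by auto
  then show ?thesis unfolding pairs_def by blast
qed

lemma dist_X: assumes "H *v x \<in> X" shows "dist_to_code x C = 2"
proof (rule antisym)
  obtain i j where ij: "i \<noteq> j" "H *v x \<in> S i j" using pair_exists[OF assms] by blast
  then obtain e where e: "supp e \<subseteq> {i,j}" "H *v e = H *v x"
    using represent[of "H *v x" "{i,j}"] S_img by auto
  have "card (supp e) \<le> 2" using card_mono[OF _ e(1)] ij by simp
  then show "dist_to_code x C \<le> 2"
    using dist_le[of "x - e" x] close_vec(1)[OF e] close_vec(2)[OF e] by simp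
  show "2 \<le> dist_to_code x C"
  proof (rule dist_ge)
    fix c assume c: "c \<in> C"
    show "2 \<le> hamming_dist x c"
    proof (rule ccontr)
      assume "\<not> 2 \<le> hamming_dist x c"
      then have "card (supp (x - c)) \<le> 1" using hd_eq by simp
      then obtain m where m: "supp (x - c) \<subseteq> {m}" using card_supp_le1 by blast
      have "H *v (x - c) = H *v x" using c by (simp add: C_mem matrix_vector_mult_diff_distrib)
      then have "H *v x \<in> L m" using in_span_supp[OF m] L_img by simp
      then show False using assms unfolding X_def by blast
    qed
  qed
qed

lemma dist_notX: assumes "H *v x \<notin> X" shows "dist_to_code x C \<le> 1"
proof -
  obtain k where "H *v x \<in> L k" using assms unfolding X_def by blast
  then obtain e where e: "supp e \<subseteq> {k}" "H *v e = H *v x"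
    using represent[of "H *v x" "{k}"] L_img by auto
  have "card (supp e) \<le> 1" using card_mono[OF _ e(1)] by simp
  then show ?thesis using dist_le[of "x - e" x] close_vec(1)[OF e] close_vec(2)[OF e] by simp
qed

lemma dist2_iff: "dist_to_code x C = 2 \<longleftrightarrow> H *v x \<in> X"
  using dist_X dist_notX by fastforce

lemma cov_rad: "covering_radius C = 2"
proof -
  obtain s where s: "s \<in> X" using X_nonempty by blast
  obtain x where "H *v x = s" using surj_H by blast
  then have "dist_to_code x C = 2" using dist_X s by simp
  moreover have "dist_to_code y C \<le> 2" for y
    using dist_X dist_notX by (cases "H *v y \<in> X") fastforce+
  ultimately show ?thesis unfolding covering_radius_def
    by (intro Max_eqI) auto
qed

lemma count2: assumes "H *v x \<in> X"
  shows "card {c\<in>C. hamming_dist x c = 2} = card (pairs (H *v x))"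
proof -
  let ?s = "H *v x"
  have Hxc: "H *v (x - c) = ?s" if "c \<in> C" for c
    using that by (simp add: C_mem matrix_vector_mult_diff_distrib)
  have "bij_betw (\<lambda>c. supp (x - c)) {c\<in>C. hamming_dist x c = 2} (pairs ?s)"
  proof (rule bij_betw_imageI)
    show "inj_on (\<lambda>c. supp (x - c)) {c\<in>C. hamming_dist x c = 2}"
    proof (rule inj_onI)
      fix c c' assume c: "c \<in> {c\<in>C. hamming_dist x c = 2}" and c': "c' \<in> {c\<in>C. hamming_dist x c = 2}"
        and e: "supp (x - c) = supp (x - c')"
      have "card (supp (x - c)) \<le> 3" using c hd_eq by simp
      then have "x - c = x - c'" using kernel_small2[of "supp (x - c)"] e Hxc c c' by simp
      then show "c = c'" by simp
    qed
    show "(\<lambda>c. supp (x - c)) ` {c\<in>C. hamming_dist x c = 2} = pairs ?s"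
    proof
      show "(\<lambda>c. supp (x - c)) ` {c\<in>C. hamming_dist x c = 2} \<subseteq> pairs ?s"
      proof
        fix p assume "p \<in> (\<lambda>c. supp (x - c)) ` {c\<in>C. hamming_dist x c = 2}"
        then obtain c where c: "c \<in> C" "hamming_dist x c = 2" "p = supp (x - c)" by blast
        then have "card p = 2" using hd_eq by simp
        then obtain i j where ij: "p = {i,j}" "i \<noteq> j" using card_2_iff by metis
        have "?s \<in> S i j" using in_span_supp[of "x - c" "{i,j}"] Hxc[OF c(1)] c(3) ij S_img by simp
        then show "p \<in> pairs ?s" using ij unfolding pairs_def by blast
      qed
      show "pairs ?s \<subseteq> (\<lambda>c. supp (x - c)) ` {c\<in>C. hamming_dist x c = 2}"
      proof
        fix p assume "p \<in> pairs ?s"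
        then obtain i j where ij: "p = {i,j}" "i \<noteq> j" "?s \<in> S i j" unfolding pairs_def by blast
        then obtain e where e: "supp e \<subseteq> {i,j}" "H *v e = ?s"
          using represent[of ?s "{i,j}"] S_img by auto
        have notsub: "\<not> supp e \<subseteq> {m}" for m
        proof
          assume "supp e \<subseteq> {m}"
          then have "?s \<in> L m" using in_span_supp e(2) L_img by metis
          then show False using assms unfolding X_def by blast
        qed
        have "supp e = {i,j}"
        proof -
          have "i \<in> supp e" using notsub[of j] e(1) by blast
          moreover have "j \<in> supp e" using notsub[of i] e(1) by blast
          ultimately show ?thesis using e(1) by blast
        qed
        moreover have "x - (x - e) = e" by simp
        moreover have "x - e \<in> C" "hamming_dist x (x - e) = card (supp e)"
          using close_vec[OF e(1)] e(2) by auto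
        ultimately show "p \<in> (\<lambda>c. supp (x - c)) ` {c\<in>C. hamming_dist x c = 2}"
          using ij by (intro image_eqI[of _ _ "x - e"]) auto
      qed
    qed
  qed
  then show ?thesis by (rule bij_betw_same_card)
qed

lemma MCF: "is_MCF C 2 ((CARD('a) - 1) div 2)"
  unfolding is_MCF_def
proof (intro conjI allI impI)
  show "covering_radius C = 2" by (rule cov_rad)
  fix x assume "dist_to_code x C = 2"
  then have X: "H *v x \<in> X" using dist2_iff by simp
  show "(CARD('a) - 1) div 2 \<le> card {c\<in>C. hamming_dist x c = 2}"
    using count2[OF X] N_bound(1)[OF X] by simp
qed


end

context oc begin
lemma sum_N: "2 * (\<Sum>s\<in>X. card (pairs s)) = (CARD('a)+1) * card X - (CARD('a)+1)*(CARD('a)^2 - CARD('a))"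
proof -
  have "2 * (\<Sum>s\<in>X. card (pairs s)) = (\<Sum>s\<in>X. (CARD('a)+1) - card (Tset s))"
    by (simp add: sum_distrib_left) (rule sum.cong, simp, use t_plus_2N in force)
  also have "\<dots> = (\<Sum>s\<in>X. CARD('a)+1) - (\<Sum>s\<in>X. card (Tset s))"
    by (rule sum_subtractf_nat) (use t_plus_2N in force)
  also have "\<dots> = (CARD('a)+1) * card X - (CARD('a)+1)*(CARD('a)^2 - CARD('a))"
    using sum_t by (simp add: mult.commute)
  finally show ?thesis .
qed

lemma D2_eq: "{x. dist_to_code x C = 2} = {x. H *v x \<in> X}" using dist2_iff by auto

lemma sum_count: "(\<Sum>x\<in>{x. dist_to_code x C = 2}. card {c\<in>C. hamming_dist x c = 2})
   = card C * (\<Sum>s\<in>X. card (pairs s))"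
proof -
  let ?D = "{x. H *v x \<in> X}"
  have "(\<Sum>x\<in>{x. dist_to_code x C = 2}. card {c\<in>C. hamming_dist x c = 2})
      = (\<Sum>x\<in>?D. card (pairs (H *v x)))" unfolding D2_eq by (rule sum.cong) (auto simp: count2)
  also have "\<dots> = (\<Sum>s\<in>X. \<Sum>x\<in>{x\<in>?D. H *v x = s}. card (pairs (H *v x)))"
    by (rule sum.group[symmetric]) auto
  also have "\<dots> = (\<Sum>s\<in>X. card C * card (pairs s))"
  proof (rule sum.cong)
    fix s assume s: "s \<in> X"
    have "{x\<in>?D. H *v x = s} = {x. H *v x = s}" using s by auto
    then have "(\<Sum>x\<in>{x\<in>?D. H *v x = s}. card (pairs (H *v x))) = (\<Sum>x\<in>{x. H *v x = s}. card (pairs s))"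
      by simp
    also have "\<dots> = card C * card (pairs s)" using fiber_card by simp
    finally show "(\<Sum>x\<in>{x\<in>?D. H *v x = s}. card (pairs (H *v x))) = card C * card (pairs s)" .
  qed simp
  also have "\<dots> = card C * (\<Sum>s\<in>X. card (pairs s))" by (simp add: sum_distrib_left)
  finally show ?thesis .
qed

lemma card_D2: "card {x. dist_to_code x C = 2} = card C * card X"
proof -
  let ?D = "{x. H *v x \<in> X}"
  have "card ?D = (\<Sum>x\<in>?D. (1::nat))" by simp
  also have "\<dots> = (\<Sum>s\<in>X. \<Sum>x\<in>{x\<in>?D. H *v x = s}. 1)"
    by (rule sum.group[symmetric]) auto
  also have "\<dots> = (\<Sum>s\<in>X. card C)"
  proof (rule sum.cong)
    fix s assume s: "s \<in> X"
    have "{x\<in>?D. H *v x = s} = {x. H *v x = s}" using s by auto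
    then show "(\<Sum>x\<in>{x\<in>?D. H *v x = s}. 1) = card C" using fiber_card by simp
  qed simp
  finally show ?thesis unfolding D2_eq by simp
qed

lemma density: "mu_density C 2 ((CARD('a) - 1) div 2) = 1 + 1 / real CARD('a)"
proof -
  define Q where "Q = real CARD('a)"
  define N where "N = (\<Sum>s\<in>X. card (pairs s))"
  define m where "m = (CARD('a) - 1) div 2"
  have Q2: "Q \<ge> 2" using q_ge2 unfolding Q_def by simp
  have sq: "CARD('a)^2 \<le> CARD('a)^3" "CARD('a) \<le> CARD('a)^2"
    using q_ge2 by (simp_all add: power2_eq_square power3_eq_cube)
  have R1: "real (card X) = Q^3 - Q^2" unfolding card_X Q_def using sq by (simp add: of_nat_diff)
  have ge: "(CARD('a)+1)*(CARD('a)^2 - CARD('a)) \<le> (CARD('a)+1) * card X"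
    unfolding card_X using q_ge2 by (intro mult_le_mono2 arith3)
  have h0: "real (2 * N) = real ((CARD('a)+1) * card X) - real ((CARD('a)+1)*(CARD('a)^2 - CARD('a)))"
    unfolding N_def sum_N using ge by (simp add: of_nat_diff)
  have e1: "real (CARD('a)^2 - CARD('a)) = Q^2 - Q" unfolding Q_def using sq by (simp add: of_nat_diff)
  have ea0: "real ((CARD('a)+1) * card X) = (Q+1) * real (card X)" unfolding Q_def by (simp add: algebra_simps)
  have ea: "real ((CARD('a)+1) * card X) = (Q+1) * (Q^3 - Q^2)" unfolding ea0 R1 ..
  have eb0: "real ((CARD('a)+1)*(CARD('a)^2 - CARD('a))) = (Q+1)*real (CARD('a)^2 - CARD('a))"
    unfolding Q_def by (simp only: of_nat_mult of_nat_add of_nat_1)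
  have eb: "real ((CARD('a)+1)*(CARD('a)^2 - CARD('a))) = (Q+1)*(Q^2 - Q)"
    unfolding eb0 e1 ..
  have c: "real (2 * N) = 2 * real N" by simp
  have R2: "2 * real N = (Q+1) * (Q^3 - Q^2) - (Q+1)*(Q^2 - Q)"
    using h0 ea eb c by linarith
  have "2 * m = CARD('a) - 1" using oddq unfolding m_def by presburger
  then have "real (2 * m) = Q - 1" unfolding Q_def using q_ge2 by (simp add: of_nat_diff)
  then have R3: "2 * real m = Q - 1" by simp
  have cC: "real (card C) > 0" using zero_C finC card_gt_0_iff by fastforce
  have "mu_density C 2 m = real (card C * N) / (real m * real (card C * card X))"
    unfolding mu_density_def sum_count card_D2 N_def by simp
  also have "\<dots> = real N / (real m * real (card X))" using cC zero_C by auto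
  also have "\<dots> = 1 + 1 / Q"
  proof -
    have A: "real N = (Q+1)*Q*(Q-1)^2/2" using R2 by (simp add: power2_eq_square power3_eq_cube algebra_simps)
    have Rm: "real m = (Q-1)/2" using R3 by simp
    have B: "real m * real (card X) = (Q-1)^2*Q^2/2" unfolding Rm R1
      by (simp add: power2_eq_square power3_eq_cube field_simps)
    have "Q - 1 \<noteq> 0" "Q \<noteq> 0" using Q2 by auto
    then have nz: "(Q-1)^2*Q^2/2 \<noteq> 0" by simp
    have K: "(Q+1)*Q*(Q-1)^2/2 = (1 + 1/Q) * ((Q-1)^2*Q^2/2)"
      using \<open>Q \<noteq> 0\<close> by (simp add: field_simps power2_eq_square)
    show ?thesis unfolding A B K using nz by simp
  qed
  finally show ?thesis unfolding m_def Q_def .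
qed

end


lemma proj_pt_scale: assumes "c \<noteq> 0" shows "proj_pt (c *s v) = proj_pt (v::'a::field^'m)"
proof
  show "proj_pt (c *s v) \<subseteq> proj_pt v"
  proof
    fix x assume "x \<in> proj_pt (c *s v)"
    then obtain d where d: "d \<noteq> 0" "x = d *s (c *s v)" unfolding proj_pt_def by blast
    then have "x = (d * c) *s v" by (simp add: vec.scale_scale)
    moreover have "d * c \<noteq> 0" using d assms by simp
    ultimately show "x \<in> proj_pt v" unfolding proj_pt_def by blast
  qed
  show "proj_pt v \<subseteq> proj_pt (c *s v)"
  proof
    fix x assume "x \<in> proj_pt v"
    then obtain d where d: "d \<noteq> 0" "x = d *s v" unfolding proj_pt_def by blast
    have "x = (d / c) *s (c *s v)" using d assms by (simp add: vec.scale_scale)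
    moreover have "d / c \<noteq> 0" using d assms by simp
    ultimately show "x \<in> proj_pt (c *s v)" unfolding proj_pt_def by blast
  qed
qed

lemma in_proj_pt: "v \<in> proj_pt v" unfolding proj_pt_def by (auto intro: exI[of _ 1])

lemma proj_pt_sub: "proj_pt v \<subseteq> vec.span {v}"
  unfolding proj_pt_def by (auto intro: vec.span_scale vec.span_base)

lemma span_PP: "vec.span (proj_pt u \<union> proj_pt v) = vec.span {u, v}"
proof
  have "proj_pt u \<union> proj_pt v \<subseteq> vec.span {u, v}"
    using proj_pt_sub[of u] proj_pt_sub[of v] vec.span_mono[of "{u}" "{u,v}"]
      vec.span_mono[of "{v}" "{u,v}"] by blast
  then show "vec.span (proj_pt u \<union> proj_pt v) \<subseteq> vec.span {u, v}"
    by (simp add: vec.span_minimal)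
  have "{u, v} \<subseteq> proj_pt u \<union> proj_pt v" using in_proj_pt by blast
  then show "vec.span {u, v} \<subseteq> vec.span (proj_pt u \<union> proj_pt v)" by (rule vec.span_mono)
qed

lemma PG_I: "v \<noteq> 0 \<Longrightarrow> proj_pt v \<in> PG" unfolding PG_def by blast

lemma corr_oc:
  fixes Ov :: "('a::{finite,field}^3) set set" and H :: "'a^'n::finite^3"
  assumes odd: "odd CARD('a)" and ov: "oval Ov" and cn: "CARD('n) = CARD('a) + 1"
    and corr: "corresponds H Ov"
  shows "oc H"
proof -
  let ?h = "\<lambda>i. column i H"
  let ?P = "\<lambda>i. proj_pt (?h i)"
  have nz: "?h i \<noteq> 0" for i using corr unfolding corresponds_def by blast
  have bij: "bij_betw ?P UNIV Ov" using corr unfolding corresponds_def by blast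
  have Pinj: "?P i = ?P j \<Longrightarrow> i = j" for i j using bij unfolding bij_betw_def by (auto dest: injD)
  have PO: "?P i \<in> Ov" for i using bij unfolding bij_betw_def by blast
  have OPG: "Ov \<subseteq> PG" using ov unfolding oval_def by blast
  have hinj: "inj ?h" by (rule injI) (metis Pinj)
  have pair: "vec.independent {?h i, ?h j}" if ij: "i \<noteq> j" for i j
  proof (rule ccontr)
    assume dep: "\<not> vec.independent {?h i, ?h j}"
    have ne: "?h i \<noteq> ?h j" using ij Pinj by metis
    have "vec.independent {?h j}" using nz by (simp add: vec.independent_insert)
    then have "?h i \<in> vec.span {?h j}" using dep ne by (simp add: vec.independent_insert)
    then obtain c where c: "?h i = c *s ?h j" unfolding vec.span_singleton by auto
    then have "c \<noteq> 0" using nz[of i] by auto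
    then have "?P i = ?P j" using c proj_pt_scale by metis
    then show False using Pinj ij by blast
  qed
  have tri: "vec.independent {?h i, ?h j, ?h k}" if d: "i \<noteq> j" "i \<noteq> k" "j \<noteq> k" for i j k
  proof -
    have ne: "?h k \<noteq> ?h i" "?h k \<noteq> ?h j" using d Pinj by metis+
    have nsp: "?h k \<notin> vec.span {?h i, ?h j}"
    proof
      assume hk: "?h k \<in> vec.span {?h i, ?h j}"
      let ?L = "proj_line (?P i) (?P j)"
      have Pne: "?P i \<noteq> ?P j" "?P i \<noteq> ?P k" "?P j \<noteq> ?P k" using d Pinj by metis+
      have PG: "?P m \<in> PG" for m using PO OPG by blast
      have Lin: "?L \<in> proj_lines" unfolding proj_lines_def using PG Pne by blast
      have sp: "vec.span (?P i \<union> ?P j) = vec.span {?h i, ?h j}" by (rule span_PP)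
      have i1: "?P i \<in> ?L" unfolding proj_line_def using PG vec.span_superset by blast
      have i2: "?P j \<in> ?L" unfolding proj_line_def using PG vec.span_superset by blast
      have "vec.span {?h k} \<subseteq> vec.span (?P i \<union> ?P j)"
        using hk sp by (simp add: vec.span_minimal)
      then have i3: "?P k \<in> ?L" unfolding proj_line_def using PG proj_pt_sub[of "?h k"] by blast
      have "\<not> (\<exists>L\<in>proj_lines. ?P i \<in> L \<and> ?P j \<in> L \<and> ?P k \<in> L)"
        using ov PO Pne unfolding oval_def by blast
      then show False using Lin i1 i2 i3 by blast
    qed
    have "vec.independent (insert (?h k) {?h i, ?h j})"
      using pair[OF d(1)] nsp ne by (simp add: vec.independent_insert)
    then show ?thesis by (simp add: insert_commute)
  qed
  show ?thesis by (unfold_locales) (use odd cn hinj pair tri in auto)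
qed



context oc begin

lemma sat:
  assumes bij: "bij_betw (\<lambda>i. proj_pt (h i)) UNIV Ov" and OPG: "Ov \<subseteq> PG"
    and cOv: "card Ov = CARD('a) + 1"
  shows "saturating_1 Ov (CARD('a) + 1) ((CARD('a) - 1) div 2)"
proof -
  let ?Pt = "\<lambda>i. proj_pt (h i)"
  have Ov_eq: "Ov = ?Pt ` UNIV" using bij unfolding bij_betw_def by blast
  have PO: "?Pt i \<in> Ov" for i using Ov_eq by blast
  have Pinj: "?Pt i = ?Pt j \<Longrightarrow> i = j" for i j using bij unfolding bij_betw_def by (auto dest: injD)
  have PG: "?Pt i \<in> PG" for i using PO OPG by blast
  have sp: "vec.span (\<Union>Ov) = UNIV"
  proof -
    obtain i j k :: 'n where d: "i \<noteq> j" "j \<noteq> k" "i \<noteq> k" using ex3 by blast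
    have "h ` {i,j,k} \<subseteq> \<Union>Ov" using PO in_proj_pt by blast
    then have "vec.span (h ` {i,j,k}) \<subseteq> vec.span (\<Union>Ov)" by (rule vec.span_mono)
    then show ?thesis using span3[OF d] by auto
  qed
  have notPG: "Ov \<noteq> PG"
  proof -
    obtain s where s: "s \<in> X" using X_nonempty by blast
    have "s \<noteq> 0" using s zero_in_L unfolding X_def by blast
    then have "proj_pt s \<in> PG" by (rule PG_I)
    moreover have "proj_pt s \<notin> Ov"
    proof
      assume "proj_pt s \<in> Ov"
      then obtain k where "proj_pt s = ?Pt k" using Ov_eq by blast
      then have "s \<in> L k" using in_proj_pt[of s] proj_pt_sub[of "h k"] unfolding L_def by blast
      then show False using s unfolding X_def by blast
    qed
    ultimately show ?thesis by blast
  qed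
  have secant: "secant_mult_sum Ov Q \<ge> (CARD('a) - 1) div 2" if Q: "Q \<in> PG - Ov" for Q
  proof -
    obtain s where s: "s \<noteq> 0" "Q = proj_pt s" using Q unfolding PG_def by blast
    have sX: "s \<in> X" unfolding X_def
    proof (intro CollectI allI notI)
      fix k assume "s \<in> L k"
      then obtain c where c: "s = c *s h k" unfolding L_def vec.span_singleton by auto
      then have "c \<noteq> 0" using s(1) by auto
      then have "Q = ?Pt k" using c s(2) proj_pt_scale by metis
      then show False using Q PO by blast
    qed
    let ?I = "{L\<in>proj_lines. Q \<in> L \<and> card (L \<inter> Ov) \<ge> 2}"
    define F where "F p = {R\<in>PG. R \<subseteq> vec.span (\<Union>(?Pt ` p))}" for p :: "'n set"
    have Fij: "F {i,j} = proj_line (?Pt i) (?Pt j)" for i j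
      unfolding F_def proj_line_def by simp
    have spij: "vec.span (?Pt i \<union> ?Pt j) = S i j" for i j unfolding S_def by (rule span_PP)
    have memF: "?Pt m \<in> F {i,j} \<longleftrightarrow> m \<in> {i,j}" if ij: "i \<noteq> j" for i j m
    proof -
      have "?Pt m \<in> F {i,j} \<longleftrightarrow> ?Pt m \<subseteq> S i j" unfolding Fij proj_line_def spij using PG by simp
      also have "\<dots> \<longleftrightarrow> h m \<in> S i j"
      proof
        assume "?Pt m \<subseteq> S i j" then show "h m \<in> S i j" using in_proj_pt by blast
      next
        assume "h m \<in> S i j"
        then have "vec.span {h m} \<subseteq> S i j" using subspace_S by (simp add: vec.span_minimal)
        then show "?Pt m \<subseteq> S i j" using proj_pt_sub by blast
      qed
      also have "\<dots> \<longleftrightarrow> m \<in> {i,j}" 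
      proof -
        have "h i \<in> S i j" "h j \<in> S i j" using h_in_S1 h_in_S2 by blast+
        then show ?thesis using h_notin_S[OF ij, of m] by auto
      qed
      finally show ?thesis .
    qed
    have Fset: "{m. ?Pt m \<in> F p} = p" if p: "p \<in> pairs s" for p
    proof -
      obtain i j where "p = {i,j}" "i \<noteq> j" using p unfolding pairs_def by blast
      then show ?thesis using memF by auto
    qed
    have FI: "F p \<in> ?I" if p: "p \<in> pairs s" for p
    proof -
      obtain i j where ij: "p = {i,j}" "i \<noteq> j" "s \<in> S i j" using p unfolding pairs_def by blast
      have ne: "?Pt i \<noteq> ?Pt j" using ij Pinj by metis
      have "F p \<in> proj_lines" unfolding ij(1) Fij proj_lines_def using PG ne by blast
      moreover have "Q \<in> F p"
      proof -
        have "vec.span {s} \<subseteq> S i j" using ij(3) subspace_S by (simp add: vec.span_minimal)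
        then have "Q \<subseteq> S i j" using s(2) proj_pt_sub by blast
        moreover have "Q \<in> PG" using Q by blast
        ultimately show ?thesis unfolding ij(1) Fij proj_line_def spij by simp
      qed
      moreover have "card (F p \<inter> Ov) \<ge> 2"
      proof -
        have "{?Pt i, ?Pt j} \<subseteq> F p \<inter> Ov" using memF[OF ij(2)] PO ij(1) by auto
        then have "card {?Pt i, ?Pt j} \<le> card (F p \<inter> Ov)" by (intro card_mono) auto
        then show ?thesis using ne by simp
      qed
      ultimately show ?thesis by blast
    qed
    have inj: "inj_on F (pairs s)"
    proof (rule inj_onI)
      fix p p' assume "p \<in> pairs s" "p' \<in> pairs s" "F p = F p'"
      then show "p = p'" using Fset by metis
    qed
    have "card (pairs s) \<le> card ?I"
      by (rule card_inj_on_le[OF inj]) (use FI in auto)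
    also have "card ?I = (\<Sum>L\<in>?I. (1::nat))" by simp
    also have "\<dots> \<le> (\<Sum>L\<in>?I. card (L \<inter> Ov) choose 2)"
    proof (rule sum_mono)
      fix L assume "L \<in> ?I"
      then have "2 \<le> card (L \<inter> Ov)" by blast
      then show "1 \<le> card (L \<inter> Ov) choose 2" by (simp add: Suc_le_eq)
    qed
    also have "\<dots> = secant_mult_sum Ov Q" unfolding secant_mult_sum_def by simp
    finally show ?thesis using N_bound(1)[OF sX] by simp
  qed
  show ?thesis unfolding saturating_1_def using OPG cOv sp notPG secant by blast
qed

end

theorem proposition5p7:
  fixes Ov :: "('a::{finite,field}^3) set set"
  assumes "odd CARD('a)"
    and "oval Ov"
    and "CARD('n::finite) = CARD('a) + 1"
  shows "saturating_1 Ov (CARD('a) + 1) ((CARD('a) - 1) div 2) \<and>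
    (\<forall>H :: 'a^'n^3. corresponds H Ov \<longrightarrow>
       (let C = code_of_pcm H; \<mu> = (CARD('a) - 1) div 2 in
         vec.dim C = CARD('n) - 3 \<and> min_distance C = 4 \<and>
         covering_radius C = 2 \<and> is_MCF C 2 \<mu> \<and>
         mu_density C 2 \<mu> = 1 + 1 / real CARD('a)))"
proof
  have OPG: "Ov \<subseteq> PG" and cOv: "card Ov = CARD('a) + 1" using assms(2) unfolding oval_def by blast+
  show "\<forall>H :: 'a^'n^3. corresponds H Ov \<longrightarrow>
       (let C = code_of_pcm H; \<mu> = (CARD('a) - 1) div 2 in
         vec.dim C = CARD('n) - 3 \<and> min_distance C = 4 \<and>
         covering_radius C = 2 \<and> is_MCF C 2 \<mu> \<and>
         mu_density C 2 \<mu> = 1 + 1 / real CARD('a))"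
  proof (intro allI impI)
    fix H :: "'a^'n^3" assume corr: "corresponds H Ov"
    interpret oc H by (rule corr_oc[OF assms corr])
    show "let C = code_of_pcm H; \<mu> = (CARD('a) - 1) div 2 in
         vec.dim C = CARD('n) - 3 \<and> min_distance C = 4 \<and>
         covering_radius C = 2 \<and> is_MCF C 2 \<mu> \<and>
         mu_density C 2 \<mu> = 1 + 1 / real CARD('a)"
      unfolding Let_def C_def[symmetric] using dim_C min_dist cov_rad MCF density by blast
  qed
  show "saturating_1 Ov (CARD('a) + 1) ((CARD('a) - 1) div 2)"
  proof -
    have "card (UNIV::'n set) = card Ov" using assms(3) cOv by simp
    then obtain g :: "'n \<Rightarrow> ('a^3) set" where g: "bij_betw g UNIV Ov"
      using finite_same_card_bij[of "UNIV::'n set" Ov] by auto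
    define rep where "rep P = (SOME v. v \<noteq> 0 \<and> P = proj_pt v)" for P :: "('a^3) set"
    have rep: "rep P \<noteq> 0 \<and> P = proj_pt (rep P)" if "P \<in> PG" for P
    proof -
      have "\<exists>v. v \<noteq> 0 \<and> P = proj_pt v" using that unfolding PG_def by blast
      then show ?thesis unfolding rep_def by (rule someI_ex)
    qed
    define H0 :: "'a^'n^3" where "H0 = (\<chi> r. \<chi> i. rep (g i) $ r)"
    have col: "column i H0 = rep (g i)" for i unfolding H0_def column_def by (simp add: vec_eq_iff)
    have gPG: "g i \<in> PG" for i using g OPG unfolding bij_betw_def by blast
    have corr: "corresponds H0 Ov"
      unfolding corresponds_def
    proof
      show "\<forall>i. column i H0 \<noteq> 0" using col rep gPG by simp
      have "bij_betw g UNIV Ov" by (rule g)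
      moreover have "\<And>i. i \<in> UNIV \<Longrightarrow> proj_pt (column i H0) = g i" using col rep gPG by metis
      ultimately show "bij_betw (\<lambda>i. proj_pt (column i H0)) UNIV Ov"
        using bij_betw_cong[of UNIV "\<lambda>i. proj_pt (column i H0)" g Ov] by blast
    qed
    interpret oc H0 by (rule corr_oc[OF assms corr])
    show ?thesis
      by (rule sat) (use corr OPG cOv in \<open>auto simp: corresponds_def\<close>)
  qed
qed


end
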